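(* Let $\delta\le\frac14$ and let $\mathcal{I}$ be a $\delta$-ONI instance with $n$ agents and $|N^1_1|\le n\left(\frac14-\delta\right)/\left(\frac14+\frac\delta3\right)$. Then every agent $i\in N^1_2$ receives a bag of value at least $\left(\frac34+\delta\right)\mathrm{MMS}_i$ at the end of Algorithm $\mathtt{approxMMS1}(\mathcal{I},\delta)$.
   Context: Instance: agents $[n]$, goods $[m]$, additive valuations; goods with index larger than $m$ are dummy goods of value 0; $\mathrm{MMS}_i$ is the max over partitions of the goods into $n$ bundles of the minimum bundle value for $i$. Ordered: $v_i(1)\ge\dots\ge v_i(m)$ for all $i$. Normalized: every agent $i$ has an MMS partition with all $n$ bundles of value exactly 1 to $i$. $\alpha$-irreducible: for every $i$, $v_i(1)<\alpha$, $v_i(\{2n-1,2n,2n+1\})<\alpha$, $v_i(\{3n-2,\dots,3n+1\})<\alpha$, $v_i(\{1,2n+1\})<\alpha$. $\delta$-ONI: ordered, normalized, $(3/4+\delta)$-irreducible. $B_k=\{k,2n-k+1\}$ ($k\in[n]$); $N^1=\{i:v_i(B_k)\le1\ \forall k\}$; $N^1_1=\{i\in N^1:v_i(2n+1)\ge\frac14-5\delta\}$; $N^1_2=N^1\setminus N^1_1$. Algorithm $\mathtt{approxMMS1}(\mathcal{I},\delta)$: $\alpha=3/4+\delta$, bags $B_1,\dots,B_n$. Phase 1: while some unassigned agent $i$ and unassigned bag $B$ have $v_i(B)\ge\alpha$, assign such $B$ to an agent valuing it at least $\alpha$, choosing an agent of $N^1_1$ whenever one qualifies. Phase 2: process remaining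 bags one by one; for the current bag $B$, while no unassigned agent values it at least $\alpha$, add an arbitrary unused good with index $>2n$; then assign $B$ to an unassigned agent valuing it at least $\alpha$, preferring $N^1_1$. (If a good must be added but none is left, the algorithm stops.) *)

theory Defs
  imports Complex_Main "HOL-Library.FuncSet"
begin

text \<open>Agents are 1..n, goods are 1..m; v i j is the value of good j for agent i.
  Goods with index outside 1..m are dummy goods of value 0.\<close>

definition gval :: "nat \<Rightarrow> (nat \<Rightarrow> nat \<Rightarrow> real) \<Rightarrow> nat \<Rightarrow> nat \<Rightarrow> real" where
  "gval m v i j = (if j \<in> {1..m} then v i j else 0)"

definition bval :: "nat \<Rightarrow> (nat \<Rightarrow> nat \<Rightarrow> real) \<Rightarrow> nat \<Rightarrow> nat set \<Rightarrow> real" where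
  "bval m v i S = (\<Sum>j\<in>S. gval m v i j)"

text \<open>A partition of the goods 1..m into n bundles 1..n is a map f from goods to bundles.\<close>
definition MMS :: "nat \<Rightarrow> nat \<Rightarrow> (nat \<Rightarrow> nat \<Rightarrow> real) \<Rightarrow> nat \<Rightarrow> real" where
  "MMS n m v i = Max ((\<lambda>f. Min ((\<lambda>k. bval m v i {j\<in>{1..m}. f j = k}) ` {1..n}))
                        ` ({1..m} \<rightarrow>\<^sub>E {1..n}))"

definition ordered_inst :: "nat \<Rightarrow> nat \<Rightarrow> (nat \<Rightarrow> nat \<Rightarrow> real) \<Rightarrow> bool" where
  "ordered_inst n m v \<longleftrightarrow> (\<forall>i\<in>{1..n}. \<forall>j\<in>{1..<m}. v i j \<ge> v i (Suc j))"

definition normalized_inst :: "nat \<Rightarrow> nat \<Rightarrow> (nat \<Rightarrow> nat \<Rightarrow> real) \<Rightarrow> bool" where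
  "normalized_inst n m v \<longleftrightarrow> (\<forall>i\<in>{1..n}. \<exists>f\<in>{1..m} \<rightarrow>\<^sub>E {1..n}.
      Min ((\<lambda>k. bval m v i {j\<in>{1..m}. f j = k}) ` {1..n}) = MMS n m v i \<and>
      (\<forall>k\<in>{1..n}. bval m v i {j\<in>{1..m}. f j = k} = 1))"

definition irreducible_inst :: "real \<Rightarrow> nat \<Rightarrow> nat \<Rightarrow> (nat \<Rightarrow> nat \<Rightarrow> real) \<Rightarrow> bool" where
  "irreducible_inst a n m v \<longleftrightarrow> (\<forall>i\<in>{1..n}.
      gval m v i 1 < a \<and>
      bval m v i {2*n-1, 2*n, 2*n+1} < a \<and>
      bval m v i {3*n-2..3*n+1} < a \<and>
      bval m v i {1, 2*n+1} < a)"

definition ONI :: "real \<Rightarrow> nat \<Rightarrow> nat \<Rightarrow> (nat \<Rightarrow> nat \<Rightarrow> real) \<Rightarrow> bool" where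
  "ONI \<delta> n m v \<longleftrightarrow> ordered_inst n m v \<and> normalized_inst n m v \<and>
      irreducible_inst (3/4 + \<delta>) n m v"

definition Bk :: "nat \<Rightarrow> nat \<Rightarrow> nat set" where
  "Bk n k = {k, 2*n - k + 1}"

definition N1 :: "nat \<Rightarrow> nat \<Rightarrow> (nat \<Rightarrow> nat \<Rightarrow> real) \<Rightarrow> nat set" where
  "N1 n m v = {i\<in>{1..n}. \<forall>k\<in>{1..n}. bval m v i (Bk n k) \<le> 1}"

definition N11 :: "real \<Rightarrow> nat \<Rightarrow> nat \<Rightarrow> (nat \<Rightarrow> nat \<Rightarrow> real) \<Rightarrow> nat set" where
  "N11 \<delta> n m v = {i\<in>N1 n m v. gval m v i (2*n+1) \<ge> 1/4 - 5*\<delta>}"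

definition N12 :: "real \<Rightarrow> nat \<Rightarrow> nat \<Rightarrow> (nat \<Rightarrow> nat \<Rightarrow> real) \<Rightarrow> nat set" where
  "N12 \<delta> n m v = N1 n m v - N11 \<delta> n m v"

text \<open>States of algorithm approxMMS1: phase flag, bag currently processed in phase 2,
  assignment of agents to bags, contents of bags.\<close>
record alg_state =
  ph2 :: bool
  cur :: "nat option"
  asg :: "nat \<Rightarrow> nat option"
  bags :: "nat \<Rightarrow> nat set"

definition unassigned_agent :: "nat \<Rightarrow> alg_state \<Rightarrow> nat \<Rightarrow> bool" where
  "unassigned_agent n s i \<longleftrightarrow> i \<in> {1..n} \<and> asg s i = None"

definition unassigned_bag :: "nat \<Rightarrow> alg_state \<Rightarrow> nat \<Rightarrow> bool" where
  "unassigned_bag n s k \<longleftrightarrow> k \<in> {1..n} \<and> (\<forall>i\<in>{1..n}. asg s i \<noteq> Some k)"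

definition may_receive :: "real \<Rightarrow> nat \<Rightarrow> nat \<Rightarrow> (nat \<Rightarrow> nat \<Rightarrow> real) \<Rightarrow> alg_state \<Rightarrow> nat \<Rightarrow> nat \<Rightarrow> bool" where
  "may_receive \<delta> n m v s i k \<longleftrightarrow>
     unassigned_agent n s i \<and> bval m v i (bags s k) \<ge> 3/4 + \<delta> \<and>
     (i \<notin> N11 \<delta> n m v \<longrightarrow>
        \<not> (\<exists>i'\<in>N11 \<delta> n m v. unassigned_agent n s i' \<and> bval m v i' (bags s k) \<ge> 3/4 + \<delta>))"

inductive alg_step :: "real \<Rightarrow> nat \<Rightarrow> nat \<Rightarrow> (nat \<Rightarrow> nat \<Rightarrow> real) \<Rightarrow> alg_state \<Rightarrow> alg_state \<Rightarrow> bool"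
  for \<delta> n m v where
  phase1_assign:
    "\<lbrakk>\<not> ph2 s; unassigned_bag n s k; may_receive \<delta> n m v s i k\<rbrakk>
     \<Longrightarrow> alg_step \<delta> n m v s (s\<lparr>asg := (asg s)(i := Some k)\<rparr>)"
| phase1_end:
    "\<lbrakk>\<not> ph2 s; \<not> (\<exists>i k. unassigned_agent n s i \<and> unassigned_bag n s k \<and>
                          bval m v i (bags s k) \<ge> 3/4 + \<delta>)\<rbrakk>
     \<Longrightarrow> alg_step \<delta> n m v s (s\<lparr>ph2 := True\<rparr>)"
| phase2_select:
    "\<lbrakk>ph2 s; cur s = None; unassigned_bag n s k\<rbrakk>
     \<Longrightarrow> alg_step \<delta> n m v s (s\<lparr>cur := Some k\<rparr>)"
| phase2_add:
    "\<lbrakk>ph2 s; cur s = Some k;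
      \<not> (\<exists>i. unassigned_agent n s i \<and> bval m v i (bags s k) \<ge> 3/4 + \<delta>);
      g \<in> {2*n+1..m}; \<forall>k'\<in>{1..n}. g \<notin> bags s k'\<rbrakk>
     \<Longrightarrow> alg_step \<delta> n m v s (s\<lparr>bags := (bags s)(k := insert g (bags s k))\<rparr>)"
| phase2_assign:
    "\<lbrakk>ph2 s; cur s = Some k; may_receive \<delta> n m v s i k\<rbrakk>
     \<Longrightarrow> alg_step \<delta> n m v s (s\<lparr>asg := (asg s)(i := Some k), cur := None\<rparr>)"

definition alg_init :: "nat \<Rightarrow> alg_state" where
  "alg_init n = \<lparr>ph2 = False, cur = None, asg = (\<lambda>_. None),
                 bags = (\<lambda>k. if k \<in> {1..n} then Bk n k else {})\<rparr>"

text \<open>Final states of (any run of) approxMMS1: reachable states with no further step,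
  including states where the algorithm stops because no good is left to add.\<close>
definition alg_final :: "real \<Rightarrow> nat \<Rightarrow> nat \<Rightarrow> (nat \<Rightarrow> nat \<Rightarrow> real) \<Rightarrow> alg_state \<Rightarrow> bool" where
  "alg_final \<delta> n m v s \<longleftrightarrow> (alg_step \<delta> n m v)\<^sup>*\<^sup>* (alg_init n) s \<and> \<not> (\<exists>s'. alg_step \<delta> n m v s s')"

end

theory Submission
  imports Defs
begin

lemma sum_UN_le_real:
  assumes "finite K" "\<forall>k\<in>K. finite (B k)" "\<forall>x. f x \<ge> (0::real)"
  shows "sum f (\<Union>k\<in>K. B k) \<le> (\<Sum>k\<in>K. sum f (B k))"
  using assms
proof (induction K rule: finite_induct)
  case empty then show ?case by simp
next
  case (insert a K)
  have fin: "finite (\<Union>k\<in>K. B k)" using insert by auto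
  have "sum f (\<Union>k\<in>insert a K. B k) = sum f (B a \<union> (\<Union>k\<in>K. B k))" by simp
  also have "\<dots> = sum f (B a) + sum f (\<Union>k\<in>K. B k) - sum f (B a \<inter> (\<Union>k\<in>K. B k))"
    using insert fin by (simp add: sum_Un)
  also have "\<dots> \<le> sum f (B a) + sum f (\<Union>k\<in>K. B k)"
    using insert(5) by (simp add: sum_nonneg)
  also have "\<dots> \<le> sum f (B a) + (\<Sum>k\<in>K. sum f (B k))" using insert by auto
  finally show ?case using insert by simp
qed

lemma gval_nonneg:
  assumes "\<forall>i\<in>{1..n}. \<forall>j\<in>{1..m}. v i j \<ge> 0" "i \<in> {1..n}"
  shows "gval m v i j \<ge> 0"
  using assms by (auto simp: gval_def)

lemma gval_mono:
  assumes "\<forall>i\<in>{1..n}. \<forall>j\<in>{1..m}. v i j \<ge> 0" "i \<in> {1..n}" "ordered_inst n m v"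
    and "1 \<le> j" "j \<le> j'"
  shows "gval m v i j' \<le> gval m v i j"
  using assms(5)
proof (induction j' rule: dec_induct)
  case base then show ?case by simp
next
  case (step k)
  have "gval m v i (Suc k) \<le> gval m v i k"
  proof (cases "Suc k \<le> m")
    case True
    then have "k \<in> {1..<m}" using step assms(4) by auto
    then show ?thesis using True assms(2,3) step assms(4) unfolding ordered_inst_def gval_def by auto
  next
    case False
    then show ?thesis using gval_nonneg[OF assms(1,2)] by (simp add: gval_def)
  qed
  then show ?case using step by simp
qed

lemma key_arith:
  assumes nn: "\<forall>i\<in>{1..n}. \<forall>j\<in>{1..m}. v i j \<ge> 0" and oni: "ONI \<delta> n m v"
    and i0: "i0 \<in> N12 \<delta> n m v"
  shows "3/4 + \<delta> + gval m v i0 (2*n+1) \<le> 1"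
proof -
  have i0n: "i0 \<in> {1..n}" and lt: "gval m v i0 (2*n+1) < 1/4 - 5*\<delta>"
    using i0 unfolding N12_def N11_def N1_def by auto
  have n1: "n \<ge> 1" using i0n by auto
  have ord: "ordered_inst n m v" using oni unfolding ONI_def by auto
  have irr: "bval m v i0 {2*n-1, 2*n, 2*n+1} < 3/4 + \<delta>"
    using oni i0n unfolding ONI_def irreducible_inst_def by auto
  have "bval m v i0 {2*n-1, 2*n, 2*n+1} = gval m v i0 (2*n-1) + gval m v i0 (2*n) + gval m v i0 (2*n+1)"
  proof -
    have "2*n-1 \<notin> {2*n, 2*n+1}" using n1 by auto
    then show ?thesis unfolding bval_def by (simp add: add.assoc)
  qed
  moreover have "gval m v i0 (2*n+1) \<le> gval m v i0 (2*n)"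
    by (rule gval_mono[OF nn i0n ord]) (use n1 in auto)
  moreover have "gval m v i0 (2*n+1) \<le> gval m v i0 (2*n-1)"
    by (rule gval_mono[OF nn i0n ord]) (use n1 in auto)
  ultimately have "3 * gval m v i0 (2*n+1) < 3/4 + \<delta>" using irr by linarith
  then show ?thesis using lt by (cases "\<delta> \<ge> 0") linarith+
qed

definition inv :: "real \<Rightarrow> nat \<Rightarrow> nat \<Rightarrow> (nat \<Rightarrow> nat \<Rightarrow> real) \<Rightarrow> nat \<Rightarrow> alg_state \<Rightarrow> bool" where
"inv \<delta> n m v i0 s \<longleftrightarrow>
 (\<not> ph2 s \<longrightarrow> cur s = None) \<and>
 (\<forall>k. cur s = Some k \<longrightarrow> unassigned_bag n s k) \<and>
 (\<forall>j\<in>{1..n}. \<forall>k. asg s j = Some k \<longrightarrow> k \<in> {1..n} \<and> bval m v j (bags s k) \<ge> 3/4+\<delta>) \<and>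
 (\<forall>j\<in>{1..n}. \<forall>j'\<in>{1..n}. \<forall>k. j \<noteq> j' \<longrightarrow> asg s j = Some k \<longrightarrow> asg s j' \<noteq> Some k) \<and>
 (\<forall>k. finite (bags s k)) \<and> (\<forall>k\<in>{1..n}. Bk n k \<subseteq> bags s k) \<and>
 (asg s i0 = None \<longrightarrow> (\<forall>k\<in>{1..n}. bval m v i0 (bags s k) \<le> 1))"

lemma inv_init:
  assumes "i0 \<in> N12 \<delta> n m v"
  shows "inv \<delta> n m v i0 (alg_init n)"
  using assms unfolding inv_def alg_init_def unassigned_bag_def N12_def N1_def
  by (auto simp: Bk_def)

lemma inv_step:
  assumes nn: "\<forall>i\<in>{1..n}. \<forall>j\<in>{1..m}. v i j \<ge> 0" and oni: "ONI \<delta> n m v"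
    and i0: "i0 \<in> N12 \<delta> n m v"
    and st: "alg_step \<delta> n m v s s'" and I: "inv \<delta> n m v i0 s"
  shows "inv \<delta> n m v i0 s'"
proof -
  have I1: "\<not> ph2 s \<longrightarrow> cur s = None"
   and I2: "\<forall>k. cur s = Some k \<longrightarrow> unassigned_bag n s k"
   and I3: "\<forall>j\<in>{1..n}. \<forall>k. asg s j = Some k \<longrightarrow> k \<in> {1..n} \<and> bval m v j (bags s k) \<ge> 3/4+\<delta>"
   and I4: "\<forall>j\<in>{1..n}. \<forall>j'\<in>{1..n}. \<forall>k. j \<noteq> j' \<longrightarrow> asg s j = Some k \<longrightarrow> asg s j' \<noteq> Some k"
   and I5: "\<forall>k. finite (bags s k)" and I6: "\<forall>k\<in>{1..n}. Bk n k \<subseteq> bags s k"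
   and I7: "asg s i0 = None \<longrightarrow> (\<forall>k\<in>{1..n}. bval m v i0 (bags s k) \<le> 1)"
    using I unfolding inv_def by blast+
  show ?thesis using st
  proof cases
    case (phase1_assign k i)
    have ub: "k \<in> {1..n}" "\<forall>j\<in>{1..n}. asg s j \<noteq> Some k" using phase1_assign(3) unfolding unassigned_bag_def by auto
    have mr: "i \<in> {1..n}" "asg s i = None" "bval m v i (bags s k) \<ge> 3/4+\<delta>"
      using phase1_assign(4) unfolding may_receive_def unassigned_agent_def by auto
    have c: "cur s = None" using I1 phase1_assign by simp
    have J3: "\<forall>j\<in>{1..n}. \<forall>k'. ((asg s)(i := Some k)) j = Some k' \<longrightarrow> k' \<in> {1..n} \<and> bval m v j (bags s k') \<ge> 3/4+\<delta>"
    proof (intro ballI allI impI)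
      fix j k' assume j: "j \<in> {1..n}" and a: "((asg s)(i := Some k)) j = Some k'"
      show "k' \<in> {1..n} \<and> bval m v j (bags s k') \<ge> 3/4+\<delta>"
      proof (cases "j = i")
        case True then show ?thesis using a ub mr by simp
      next
        case False then have "asg s j = Some k'" using a by simp
        then show ?thesis using I3 j by blast
      qed
    qed
    have J4: "\<forall>j\<in>{1..n}. \<forall>j'\<in>{1..n}. \<forall>k'. j \<noteq> j' \<longrightarrow> ((asg s)(i := Some k)) j = Some k' \<longrightarrow> ((asg s)(i := Some k)) j' \<noteq> Some k'"
    proof (intro ballI allI impI)
      fix j j' k' assume j: "j \<in> {1..n}" and j': "j' \<in> {1..n}" and ne: "j \<noteq> j'"
        and a: "((asg s)(i := Some k)) j = Some k'"
      show "((asg s)(i := Some k)) j' \<noteq> Some k'"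
      proof (cases "j = i")
        case True
        then have "k' = k" "j' \<noteq> i" using a ne by auto
        then show ?thesis using ub(2) j' by simp
      next
        case False
        then have aj: "asg s j = Some k'" using a by simp
        show ?thesis
        proof (cases "j' = i")
          case True
          have "k' \<noteq> k" using aj ub(2) j by auto
          then show ?thesis using True by simp
        next
          case False
          then show ?thesis using I4 j j' ne aj by simp
        qed
      qed
    qed
    have J7: "((asg s)(i := Some k)) i0 = None \<longrightarrow> asg s i0 = None" by auto
    have e: "ph2 s' = ph2 s" "cur s' = cur s" "asg s' = (asg s)(i := Some k)" "bags s' = bags s"
      using phase1_assign by simp_all
    have J7': "((asg s)(i := Some k)) i0 = None \<longrightarrow> (\<forall>k\<in>{1..n}. bval m v i0 (bags s k) \<le> 1)"
      using J7 I7 by blast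
    show ?thesis unfolding inv_def e by (intro conjI J3 J4 J7' I5 I6 impI allI) (simp_all add: c)
  next
    case phase1_end
    have c: "cur s = None" using I1 phase1_end by simp
    have e: "ph2 s'" "cur s' = cur s" "asg s' = asg s" "bags s' = bags s"
      using phase1_end by simp_all
    show ?thesis unfolding inv_def e apply (intro conjI) by (fact | simp add: c)+
  next
    case (phase2_select k)
    have J2: "unassigned_bag n s' k" using phase2_select unfolding unassigned_bag_def by simp
    have e: "ph2 s'" "cur s' = Some k" "asg s' = asg s" "bags s' = bags s"
      using phase2_select by simp_all
    show ?thesis unfolding inv_def e apply (intro conjI) by (fact | simp | use J2 in simp)+
  next
    case (phase2_assign k i)
    have ub: "k \<in> {1..n}" "\<forall>j\<in>{1..n}. asg s j \<noteq> Some k" using I2 phase2_assign(3) unfolding unassigned_bag_def by auto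
    have mr: "i \<in> {1..n}" "asg s i = None" "bval m v i (bags s k) \<ge> 3/4+\<delta>"
      using phase2_assign(4) unfolding may_receive_def unassigned_agent_def by auto
    have J3: "\<forall>j\<in>{1..n}. \<forall>k'. ((asg s)(i := Some k)) j = Some k' \<longrightarrow> k' \<in> {1..n} \<and> bval m v j (bags s k') \<ge> 3/4+\<delta>"
    proof (intro ballI allI impI)
      fix j k' assume j: "j \<in> {1..n}" and a: "((asg s)(i := Some k)) j = Some k'"
      show "k' \<in> {1..n} \<and> bval m v j (bags s k') \<ge> 3/4+\<delta>"
      proof (cases "j = i")
        case True then show ?thesis using a ub mr by simp
      next
        case False then have "asg s j = Some k'" using a by simp
        then show ?thesis using I3 j by blast
      qed
    qed
    have J4: "\<forall>j\<in>{1..n}. \<forall>j'\<in>{1..n}. \<forall>k'. j \<noteq> j' \<longrightarrow> ((asg s)(i := Some k)) j = Some k' \<longrightarrow> ((asg s)(i := Some k)) j' \<noteq> Some k'"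
    proof (intro ballI allI impI)
      fix j j' k' assume j: "j \<in> {1..n}" and j': "j' \<in> {1..n}" and ne: "j \<noteq> j'"
        and a: "((asg s)(i := Some k)) j = Some k'"
      show "((asg s)(i := Some k)) j' \<noteq> Some k'"
      proof (cases "j = i")
        case True
        then have "k' = k" "j' \<noteq> i" using a ne by auto
        then show ?thesis using ub(2) j' by simp
      next
        case False
        then have aj: "asg s j = Some k'" using a by simp
        show ?thesis
        proof (cases "j' = i")
          case True
          have "k' \<noteq> k" using aj ub(2) j by auto
          then show ?thesis using True by simp
        next
          case False
          then show ?thesis using I4 j j' ne aj by simp
        qed
      qed
    qed
    have J7: "((asg s)(i := Some k)) i0 = None \<longrightarrow> asg s i0 = None" by auto
    have e: "ph2 s'" "cur s' = None" "asg s' = (asg s)(i := Some k)" "bags s' = bags s"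
      using phase2_assign by simp_all
    have J7': "((asg s)(i := Some k)) i0 = None \<longrightarrow> (\<forall>k\<in>{1..n}. bval m v i0 (bags s k) \<le> 1)"
      using J7 I7 by blast
    show ?thesis unfolding inv_def e by (intro conjI J3 J4 J7' I5 I6 impI allI) simp_all
  next
    case (phase2_add k g)
    have ub: "unassigned_bag n s k" using I2 phase2_add by auto
    then have kn: "k \<in> {1..n}" and na: "\<forall>j\<in>{1..n}. asg s j \<noteq> Some k"
      unfolding unassigned_bag_def by auto
    have gnot: "g \<notin> bags s k" using phase2_add kn by auto
    have fin: "finite (bags s k)" using I5 by auto
    have B: "bags s' = (bags s)(k := insert g (bags s k))" using phase2_add by simp
    have last: "\<forall>k'\<in>{1..n}. bval m v i0 (bags s' k') \<le> 1" if an: "asg s i0 = None"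
    proof
      fix k' assume k': "k' \<in> {1..n}"
      show "bval m v i0 (bags s' k') \<le> 1"
      proof (cases "k' = k")
        case False then show ?thesis using I7 an k' B by simp
      next
        case True
        have i0n: "i0 \<in> {1..n}" using i0 unfolding N12_def N1_def by auto
        have ua: "unassigned_agent n s i0" using an i0n by (simp add: unassigned_agent_def)
        have "\<not> bval m v i0 (bags s k) \<ge> 3/4 + \<delta>" using phase2_add(4) ua by blast
        then have lt: "bval m v i0 (bags s k) < 3/4 + \<delta>" by linarith
        have ord: "ordered_inst n m v" using oni unfolding ONI_def by simp
        have "gval m v i0 g \<le> gval m v i0 (2*n+1)"
          using phase2_add(5) by (intro gval_mono[OF nn i0n ord]) auto
        moreover have "bval m v i0 (bags s' k) = bval m v i0 (bags s k) + gval m v i0 g"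
          using B gnot fin unfolding bval_def by simp
        ultimately show ?thesis unfolding True using lt key_arith[OF nn oni i0] by linarith
      qed
    qed
    have J3: "\<forall>j\<in>{1..n}. \<forall>k'. asg s j = Some k' \<longrightarrow> k' \<in> {1..n} \<and> bval m v j (bags s' k') \<ge> 3/4+\<delta>"
    proof (intro ballI allI impI)
      fix j k' assume j: "j \<in> {1..n}" and a: "asg s j = Some k'"
      then have "k' \<noteq> k" using na by auto
      then have "bags s' k' = bags s k'" using B by simp
      moreover have "k' \<in> {1..n} \<and> bval m v j (bags s k') \<ge> 3/4+\<delta>" using I3 j a by blast
      ultimately show "k' \<in> {1..n} \<and> bval m v j (bags s' k') \<ge> 3/4+\<delta>" by simp
    qed
    have J5: "\<forall>k'. finite (bags s' k')" using I5 B by simp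
    have J6: "\<forall>k'\<in>{1..n}. Bk n k' \<subseteq> bags s' k'" using I6 B by auto
    have J2: "\<forall>k'. cur s' = Some k' \<longrightarrow> unassigned_bag n s' k'"
      using I2 phase2_add unfolding unassigned_bag_def by simp
    have last': "asg s i0 = None \<longrightarrow> (\<forall>k'\<in>{1..n}. bval m v i0 (bags s' k') \<le> 1)"
      using last by blast
    have e: "ph2 s' = True" "asg s' = asg s" using phase2_add by simp_all
    show ?thesis unfolding inv_def e by (intro conjI J2 J3 I4 J5 J6 last' impI) simp
  qed
qed

lemma inv_reach:
  assumes nn: "\<forall>i\<in>{1..n}. \<forall>j\<in>{1..m}. v i j \<ge> 0" and oni: "ONI \<delta> n m v"
    and i0: "i0 \<in> N12 \<delta> n m v"
    and r: "(alg_step \<delta> n m v)\<^sup>*\<^sup>* (alg_init n) s"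
  shows "inv \<delta> n m v i0 s"
  using r
proof (induction rule: rtranclp_induct)
  case base then show ?case using inv_init[OF i0] .
next
  case (step y z) then show ?case using inv_step[OF nn oni i0] by blast
qed

lemma MMS_one:
  assumes oni: "ONI \<delta> n m v" and i: "i \<in> {1..n}"
  shows "MMS n m v i = 1"
proof -
  obtain f where f: "f \<in> {1..m} \<rightarrow>\<^sub>E {1..n}"
    "Min ((\<lambda>k. bval m v i {j\<in>{1..m}. f j = k}) ` {1..n}) = MMS n m v i"
    "\<forall>k\<in>{1..n}. bval m v i {j\<in>{1..m}. f j = k} = 1"
    using oni i unfolding ONI_def normalized_inst_def by blast
  have "(\<lambda>k. bval m v i {j\<in>{1..m}. f j = k}) ` {1..n} = {1}" using f(3) i by auto
  then show ?thesis using f(2) by simp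
qed

lemma total_val:
  assumes oni: "ONI \<delta> n m v" and i: "i \<in> {1..n}"
  shows "bval m v i {1..m} = real n"
proof -
  obtain f where f: "f \<in> {1..m} \<rightarrow>\<^sub>E {1..n}"
    "\<forall>k\<in>{1..n}. bval m v i {j\<in>{1..m}. f j = k} = 1"
    using oni i unfolding ONI_def normalized_inst_def by blast
  have "bval m v i {1..m} = (\<Sum>k\<in>{1..n}. bval m v i {j\<in>{1..m}. f j = k})"
    unfolding bval_def using f(1) by (subst sum.group[symmetric]) auto
  also have "\<dots> = real n" using f(2) by simp
  finally show ?thesis .
qed

theorem lemma23:
  fixes \<delta> :: real and n m :: nat and v :: "nat \<Rightarrow> nat \<Rightarrow> real" and s :: alg_state
  assumes "\<delta> \<le> 1/4"
    and "\<forall>i\<in>{1..n}. \<forall>j\<in>{1..m}. v i j \<ge> 0"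
    and "ONI \<delta> n m v"
    and "real (card (N11 \<delta> n m v)) \<le> real n * (1/4 - \<delta>) / (1/4 + \<delta>/3)"
    and "alg_final \<delta> n m v s"
  shows "\<forall>i\<in>N12 \<delta> n m v. \<exists>k\<in>{1..n}. asg s i = Some k \<and>
           bval m v i (bags s k) \<ge> (3/4 + \<delta>) * MMS n m v i"
proof
  fix i0 assume i0: "i0 \<in> N12 \<delta> n m v"
  note nn = assms(2) and oni = assms(3)
  have i0n: "i0 \<in> {1..n}" using i0 unfolding N12_def N1_def by auto
  have reach: "(alg_step \<delta> n m v)\<^sup>*\<^sup>* (alg_init n) s" and nostep: "\<not> (\<exists>s'. alg_step \<delta> n m v s s')"
    using assms(5) unfolding alg_final_def by auto
  have I: "inv \<delta> n m v i0 s" using inv_reach[OF nn oni i0 reach] .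
  have I2: "\<forall>k. cur s = Some k \<longrightarrow> unassigned_bag n s k"
   and I3: "\<forall>j\<in>{1..n}. \<forall>k. asg s j = Some k \<longrightarrow> k \<in> {1..n} \<and> bval m v j (bags s k) \<ge> 3/4+\<delta>"
   and I4: "\<forall>j\<in>{1..n}. \<forall>j'\<in>{1..n}. \<forall>k. j \<noteq> j' \<longrightarrow> asg s j = Some k \<longrightarrow> asg s j' \<noteq> Some k"
   and I5: "\<forall>k. finite (bags s k)" and I6: "\<forall>k\<in>{1..n}. Bk n k \<subseteq> bags s k"
   and I7: "asg s i0 = None \<longrightarrow> (\<forall>k\<in>{1..n}. bval m v i0 (bags s k) \<le> 1)"
    using I unfolding inv_def by blast+
  show "\<exists>k\<in>{1..n}. asg s i0 = Some k \<and> bval m v i0 (bags s k) \<ge> (3/4 + \<delta>) * MMS n m v i0"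
  proof (cases "asg s i0")
    case (Some k)
    have "k \<in> {1..n} \<and> bval m v i0 (bags s k) \<ge> 3/4+\<delta>" using I3 i0n Some by blast
    then show ?thesis using Some MMS_one[OF oni i0n] by auto
  next
    case None
    have recv: "\<exists>i'. may_receive \<delta> n m v s i' k"
      if "unassigned_agent n s j" "bval m v j (bags s k) \<ge> 3/4 + \<delta>" for j k
    proof (cases "\<exists>i'\<in>N11 \<delta> n m v. unassigned_agent n s i' \<and> bval m v i' (bags s k) \<ge> 3/4 + \<delta>")
      case True then show ?thesis unfolding may_receive_def by blast
    next
      case False then show ?thesis using that unfolding may_receive_def by blast
    qed
    have False
    proof (cases "ph2 s")
      case False
      have "\<exists>i k. unassigned_agent n s i \<and> unassigned_bag n s k \<and> bval m v i (bags s k) \<ge> 3/4 + \<delta>"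
        using nostep alg_step.phase1_end[OF False] by blast
      then obtain j k where "unassigned_agent n s j" "unassigned_bag n s k" "bval m v j (bags s k) \<ge> 3/4 + \<delta>"
        by blast
      then show False using recv nostep alg_step.phase1_assign[OF False] by blast
    next
      case ph: True
      show False
      proof (cases "cur s")
        case cN: None
        define A where "A = {j\<in>{1..n}. asg s j \<noteq> None}"
        have Asub: "A \<subseteq> {1..n} - {i0}" using None unfolding A_def by auto
        have cA: "card A < n" 
        proof -
          have "card A \<le> card ({1..n} - {i0})" using Asub by (intro card_mono) auto
          also have "\<dots> = n - 1" using i0n by simp
          finally show ?thesis using i0n by auto
        qed
        have injA: "inj_on (\<lambda>j. the (asg s j)) A"
        proof (rule inj_onI)
          fix x y assume "x \<in> A" "y \<in> A" "the (asg s x) = the (asg s y)"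
          moreover note I4
          ultimately show "x = y" unfolding A_def by (metis (mono_tags, lifting) mem_Collect_eq option.collapse)
        qed
        have cimg: "card ((\<lambda>j. the (asg s j)) ` A) < card {1..n}"
          using cA card_image_le[of A] by (simp add: card_image[OF injA])
        have "\<not> {1..n} \<subseteq> (\<lambda>j. the (asg s j)) ` A"
        proof
          assume "{1..n} \<subseteq> (\<lambda>j. the (asg s j)) ` A"
          moreover have "finite ((\<lambda>j. the (asg s j)) ` A)" unfolding A_def by simp
          ultimately have "card {1..n} \<le> card ((\<lambda>j. the (asg s j)) ` A)" by (rule card_mono[rotated])
          then show False using cimg by simp
        qed
        then obtain k where k: "k \<in> {1..n}" "k \<notin> (\<lambda>j. the (asg s j)) ` A" by blast
        have "unassigned_bag n s k"
          unfolding unassigned_bag_def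
        proof (intro conjI ballI k(1))
          fix j assume j: "j \<in> {1..n}"
          show "asg s j \<noteq> Some k"
          proof
            assume "asg s j = Some k"
            then have "j \<in> A" "the (asg s j) = k" using j unfolding A_def by auto
            then show False using k(2) by blast
          qed
        qed
        then show False using nostep alg_step.phase2_select[OF ph cN] by blast
      next
        case (Some k)
        have kn: "k \<in> {1..n}" using I2 Some unfolding unassigned_bag_def by auto
        have noval: "\<not> (\<exists>i. unassigned_agent n s i \<and> bval m v i (bags s k) \<ge> 3/4 + \<delta>)"
          using recv nostep alg_step.phase2_assign[OF ph Some] by blast
        have nog: "\<forall>g\<in>{2*n+1..m}. \<exists>k'\<in>{1..n}. g \<in> bags s k'"
          using nostep alg_step.phase2_add[OF ph Some noval] by blast
        have cover: "{1..m} \<subseteq> (\<Union>k'\<in>{1..n}. bags s k')"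
        proof
          fix j assume j: "j \<in> {1..m}"
          show "j \<in> (\<Union>k'\<in>{1..n}. bags s k')"
          proof (cases "j \<le> 2*n")
            case False then show ?thesis using nog j by auto
          next
            case True
            show ?thesis
            proof (cases "j \<le> n")
              case True
              then have "j \<in> Bk n j" "j \<in> {1..n}" using j by (auto simp: Bk_def)
              then show ?thesis using I6 by blast
            next
              case False
              then have "j \<in> Bk n (2*n - j + 1)" "2*n-j+1 \<in> {1..n}" using j \<open>j \<le> 2*n\<close> by (auto simp: Bk_def)
              then show ?thesis using I6 by blast
            qed
          qed
        qed
        have fins: "\<forall>k'\<in>{1..n}. finite (bags s k')" using I5 by auto
        have nng: "\<forall>x. gval m v i0 x \<ge> 0" using gval_nonneg[OF nn i0n] by auto
        have "real n = bval m v i0 {1..m}" using total_val[OF oni i0n] by simp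
        also have "\<dots> \<le> bval m v i0 (\<Union>k'\<in>{1..n}. bags s k')"
          unfolding bval_def using cover fins nng by (intro sum_mono2) auto
        also have "\<dots> \<le> (\<Sum>k'\<in>{1..n}. bval m v i0 (bags s k'))"
          unfolding bval_def using sum_UN_le_real[OF _ fins nng] by simp
        also have "\<dots> < (\<Sum>k'\<in>{1..n}. 1)"
        proof (rule sum_strict_mono_ex1)
          show "\<forall>x\<in>{1..n}. bval m v i0 (bags s x) \<le> 1" using I7 None by blast
          have "unassigned_agent n s i0" using None i0n by (simp add: unassigned_agent_def)
          then have "bval m v i0 (bags s k) < 3/4 + \<delta>" using noval by auto
          then have "bval m v i0 (bags s k) < 1" using assms(1) by linarith
          then show "\<exists>a\<in>{1..n}. bval m v i0 (bags s a) < 1" using kn by blast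
        qed auto
        finally show False by simp
      qed
    qed
    then show ?thesis ..
  qed
qed

end
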